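(* Let $p$ be a prime, $q=p^l$, $m\ge1$, $n=2m$. For $0\leqslant r<n(q-1)$, $I\subseteq M_r$ and $\overline{I}=M_r\setminus I$, the dual code (with respect to the standard inner product on $\mathbb{F}_q^{q^n}$) satisfies $$\mathcal{C}_q(r,I,n)^\perp=\mathcal{C}_q(n(q-1)-r,\overline{I},n).$$
   Context: Let $N=q^n-1$ and $\alpha$ a primitive element of $\mathbb{F}_{q^n}$. Every integer $0\le u\le q^n-1$ is written $u=\sum_{i=0}^{n-1}u_iq^i$, $u_i\in\{0,\dots,q-1\}$; $\mathrm{wt}_q(u)=\sum u_i$, $O(u)=\sum_{i\text{ odd}}u_i$, $E(u)=\sum_{i\text{ even}}u_i$. For $-1\le r<n(q-1)$, $Z_r=\{\alpha^u\mid 0<u\le q^n-1,\ \mathrm{wt}_q(u)\le n(q-1)-r-1\}$. For $0\le r\le n(q-1)$ and integer $k\ge0$, $\Theta^{(r)}_k=\{\alpha^u\mid 0\le u\le q^n-1,\ \mathrm{wt}_q(u)=n(q-1)-r,\ |O(u)-E(u)|=k\}$. $M_r$ is the set of even (resp. odd) integers $k\in[0,m(q-1)]$ when $r$ is even (resp. odd). For $0\le r<n(q-1)$, $I\subseteq M_r$: $\overline I=M_r\setminus I$, $Z_{r,I}=Z_r\cup\bigcup_{k\in\overline I}\Theta^{(r)}_k$. A cyclic code of length $N$ over $\mathbb{F}_q$ with zero set $Z$ is $\{(c_0,\dots,c_{N-1})\in\mathbb{F}_q^N\mid \sum_ic_i\beta^i=0\ \forall\beta\in Z\}$, coordinate $i$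 labelled by $\alpha^i$. $\mathcal{C}_q(r,I,n)^*$ is the cyclic code with zero set $Z_{r,I}$ and $\mathcal{C}_q(r,I,n)$ its extended code (coordinates indexed by $\mathbb{F}_{q^n}$, extra coordinate labelled $0$ equal to $-\sum_ic_i$). The generalized Reed–Muller code $\mathcal{R}_q(r,n)$ ($-1\le r<n(q-1)$) is the extended code of the cyclic code with zero set $Z_r$, and $\mathcal{R}_q(n(q-1),n)=\mathbb{F}_q^{q^n}$. By convention, $\mathcal{C}_q(n(q-1),I,n)=\mathcal{R}_q(n(q-1)-1,n)$ if $0\notin I$ and $\mathcal{C}_q(n(q-1),I,n)=\mathbb{F}_q^{q^n}$ if $0\in I$. *)

theory Defs
  imports Main "HOL-Computational_Algebra.Primes"
begin

definition qdigit :: "nat \<Rightarrow> nat \<Rightarrow> nat \<Rightarrow> nat" where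
  "qdigit q u i = (u div q ^ i) mod q"

definition wtq :: "nat \<Rightarrow> nat \<Rightarrow> nat \<Rightarrow> nat" where
  "wtq q n u = (\<Sum>i<n. qdigit q u i)"

definition Osum :: "nat \<Rightarrow> nat \<Rightarrow> nat \<Rightarrow> nat" where
  "Osum q n u = (\<Sum>i\<in>{i. i < n \<and> odd i}. qdigit q u i)"

definition Esum :: "nat \<Rightarrow> nat \<Rightarrow> nat \<Rightarrow> nat" where
  "Esum q n u = (\<Sum>i\<in>{i. i < n \<and> even i}. qdigit q u i)"

definition Mset :: "nat \<Rightarrow> nat \<Rightarrow> nat \<Rightarrow> nat set" where
  "Mset q m r = {k. k \<le> m * (q - 1) \<and> (even k \<longleftrightarrow> even r)}"

text \<open>Z_r (for 0 <= r < n(q-1)); the condition wt <= n(q-1)-r-1 is written without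
  truncated subtraction.\<close>
definition Zset :: "nat \<Rightarrow> nat \<Rightarrow> 'a::field \<Rightarrow> nat \<Rightarrow> 'a set" where
  "Zset q n \<alpha> r = {\<alpha> ^ u | u. 0 < u \<and> u \<le> q ^ n - 1 \<and> wtq q n u + r + 1 \<le> n * (q - 1)}"

definition Theta :: "nat \<Rightarrow> nat \<Rightarrow> 'a::field \<Rightarrow> nat \<Rightarrow> nat \<Rightarrow> 'a set" where
  "Theta q n \<alpha> r k = {\<alpha> ^ u | u. u \<le> q ^ n - 1 \<and> wtq q n u + r = n * (q - 1)
      \<and> \<bar>int (Osum q n u) - int (Esum q n u)\<bar> = int k}"

definition ZrI :: "nat \<Rightarrow> nat \<Rightarrow> nat \<Rightarrow> 'a::field \<Rightarrow> nat \<Rightarrow> nat set \<Rightarrow> 'a set" where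
  "ZrI q m n \<alpha> r I = Zset q n \<alpha> r \<union> (\<Union>k\<in>Mset q m r - I. Theta q n \<alpha> r k)"

text \<open>The prime subfield F_q of the field 'a (of size q^n): the roots of x^q - x.\<close>
definition Fq :: "nat \<Rightarrow> 'a::field set" where
  "Fq q = {x. x ^ q = x}"

text \<open>Words of length q^n over F_q, coordinates indexed by the elements of F_{q^n}.\<close>
definition words :: "nat \<Rightarrow> ('a::field \<Rightarrow> 'a) set" where
  "words q = {c. \<forall>x. c x \<in> Fq q}"

text \<open>Extended code of the cyclic code of length N = q^n - 1 with zero set Z
  (coordinate i labelled alpha^i, extra coordinate labelled 0).\<close>
definition ext_cyclic :: "nat \<Rightarrow> nat \<Rightarrow> 'a::field \<Rightarrow> 'a set \<Rightarrow> ('a \<Rightarrow> 'a) set" where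
  "ext_cyclic q n \<alpha> Z = {c \<in> words q.
      (\<forall>\<beta>\<in>Z. (\<Sum>i<q ^ n - 1. c (\<alpha> ^ i) * \<beta> ^ i) = 0)
      \<and> c 0 = - (\<Sum>i<q ^ n - 1. c (\<alpha> ^ i))}"

definition GRM :: "nat \<Rightarrow> nat \<Rightarrow> 'a::field \<Rightarrow> int \<Rightarrow> ('a \<Rightarrow> 'a) set" where
  "GRM q n \<alpha> r = (if r = int (n * (q - 1)) then words q
     else ext_cyclic q n \<alpha> {\<alpha> ^ u | u. 0 < u \<and> u \<le> q ^ n - 1 \<and> int (wtq q n u) \<le> int (n * (q - 1)) - r - 1})"

definition Ccode :: "nat \<Rightarrow> nat \<Rightarrow> 'a::field \<Rightarrow> nat \<Rightarrow> nat set \<Rightarrow> ('a \<Rightarrow> 'a) set" where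
  "Ccode q m \<alpha> r I = (let n = 2 * m in
     if r = n * (q - 1) then
       (if 0 \<in> I then words q else GRM q n \<alpha> (int (n * (q - 1)) - 1))
     else ext_cyclic q n \<alpha> (ZrI q m n \<alpha> r I))"

definition dual_code :: "nat \<Rightarrow> ('a::{field,finite} \<Rightarrow> 'a) set \<Rightarrow> ('a \<Rightarrow> 'a) set" where
  "dual_code q C = {d \<in> words q. \<forall>c\<in>C. (\<Sum>x\<in>UNIV. c x * d x) = 0}"

definition primitive_elem :: "'a::field \<Rightarrow> bool" where
  "primitive_elem \<alpha> \<longleftrightarrow> (\<forall>x. x \<noteq> 0 \<longrightarrow> (\<exists>i. x = \<alpha> ^ i))"

end

theory Submission
  imports Defs "HOL-Computational_Algebra.Polynomial"
begin


lemma qd_lt: "0 < q \<Longrightarrow> qdigit q u i < q"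
  by (simp add: qdigit_def)

lemma qd_Suc: "qdigit q u (Suc i) = qdigit q (u div q) i"
  by (simp add: qdigit_def div_mult2_eq)

lemma qd_0: "qdigit q u 0 = u mod q" by (simp add: qdigit_def)

lemma dig_expand: "0 < q \<Longrightarrow> u < q ^ n \<Longrightarrow> u = (\<Sum>i<n. qdigit q u i * q ^ i)"
proof (induction n arbitrary: u)
  case 0 thus ?case by simp
next
  case (Suc n)
  have "u div q < q ^ n" using Suc.prems by (simp add: div_less_iff_less_mult mult.commute)
  hence IH: "u div q = (\<Sum>i<n. qdigit q (u div q) i * q ^ i)" using Suc by blast
  have "(\<Sum>i<Suc n. qdigit q u i * q ^ i) = u mod q + q * (\<Sum>i<n. qdigit q (u div q) i * q ^ i)"
    unfolding sum.lessThan_Suc_shift by (simp add: qd_Suc qd_0 sum_distrib_left mult_ac)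
  also have "\<dots> = u" using IH by simp
  finally show ?case by simp
qed

lemma dig_extract: "(\<forall>i<n. f i < q) \<Longrightarrow> j < n \<Longrightarrow> qdigit q (\<Sum>i<n. f i * q ^ i) j = f j"
proof (induction n arbitrary: f j)
  case 0 thus ?case by simp
next
  case (Suc n)
  have q0: "0 < q" using Suc.prems by auto
  have S: "(\<Sum>i<Suc n. f i * q ^ i) = f 0 + q * (\<Sum>i<n. f (Suc i) * q ^ i)"
    unfolding sum.lessThan_Suc_shift by (simp add: sum_distrib_left mult_ac)
  show ?case
  proof (cases j)
    case 0 thus ?thesis using Suc.prems by (simp only: S qd_0) simp
  next
    case (Suc j')
    have d: "(f 0 + q * (\<Sum>i<n. f (Suc i) * q ^ i)) div q = (\<Sum>i<n. f (Suc i) * q ^ i)"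
      using Suc.prems q0 by simp
    have "qdigit q (\<Sum>i<Suc n. f i * q ^ i) j = qdigit q (\<Sum>i<n. f (Suc i) * q ^ i) j'"
      by (simp only: S Suc qd_Suc d)
    thus ?thesis using Suc Suc.IH[of "\<lambda>i. f (Suc i)" j'] Suc.prems by simp
  qed
qed

lemma allmax: "(\<Sum>i<n. (q - 1) * q ^ i) = q ^ n - (1::nat)"
proof (induction n)
  case (Suc n)
  show ?case
  proof (cases "q = 0")
    case True thus ?thesis by (cases n) simp_all
  next
    case False
    have "q ^ n \<ge> 1" using False by simp
    hence "q ^ n - 1 + (q - 1) * q ^ n = q * q ^ n - 1" using False
      by (simp add: algebra_simps diff_mult_distrib)
    thus ?thesis using Suc by simp
  qed
qed simp

lemma bound: "(\<forall>i<n. f i < q) \<Longrightarrow> (\<Sum>i<n. f i * q ^ i) \<le> q ^ n - (1::nat)"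
proof -
  assume "\<forall>i<n. f i < q"
  hence "(\<Sum>i<n. f i * q ^ i) \<le> (\<Sum>i<n. (q - 1) * q ^ i)"
    by (intro sum_mono mult_right_mono) auto
  thus ?thesis by (simp only: allmax)
qed


definition Dd :: "nat \<Rightarrow> nat \<Rightarrow> nat \<Rightarrow> nat" where
  "Dd q n u = nat \<bar>int (Osum q n u) - int (Esum q n u)\<bar>"

definition rot :: "nat \<Rightarrow> nat \<Rightarrow> nat \<Rightarrow> nat" where
  "rot q n u = (\<Sum>i<n. (if i = 0 then qdigit q u (n - 1) else qdigit q u (i - 1)) * q ^ i)"

lemma Osum_alt: "Osum q (2 * m) u = (\<Sum>j<m. qdigit q u (2 * j + 1))"
proof -
  have "{i. i < 2 * m \<and> odd i} = (\<lambda>j. 2 * j + 1) ` {..<m}"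
    by (auto elim!: oddE simp: image_iff)
  moreover have "inj_on (\<lambda>j. 2 * j + 1) {..<m}" by (auto simp: inj_on_def)
  ultimately show ?thesis unfolding Osum_def by (simp add: sum.reindex)
qed

lemma Esum_alt: "Esum q (2 * m) u = (\<Sum>j<m. qdigit q u (2 * j))"
proof -
  have "{i. i < 2 * m \<and> even i} = (\<lambda>j. 2 * j) ` {..<m}"
    by (auto elim!: evenE simp: image_iff)
  moreover have "inj_on (\<lambda>j. 2 * j) {..<m}" by (auto simp: inj_on_def)
  ultimately show ?thesis unfolding Esum_def by (simp add: sum.reindex)
qed

lemma sum_2m: "(\<Sum>i<2 * (m::nat). f i) = (\<Sum>j<m. f (2 * j) + f (2 * j + 1))"
  by (induction m) (simp_all add: algebra_simps)

lemma wt_OE: "wtq q (2 * m) u = Osum q (2 * m) u + Esum q (2 * m) u"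
  by (simp add: wtq_def Osum_alt Esum_alt sum_2m sum.distrib)

lemma rot_digits: "0 < q \<Longrightarrow> i < n \<Longrightarrow>
    qdigit q (rot q n u) i = (if i = 0 then qdigit q u (n - 1) else qdigit q u (i - 1))"
  unfolding rot_def by (rule dig_extract) (auto simp: qd_lt)

lemma rot_le: "0 < q \<Longrightarrow> rot q n u \<le> q ^ n - 1"
  unfolding rot_def by (rule bound) (auto simp: qd_lt)

lemma rot_eq:
  assumes q: "0 < q" and n: "1 \<le> n" and u: "u < q ^ n"
  shows "u * q = rot q n u + qdigit q u (n - 1) * (q ^ n - 1)"
proof -
  obtain n' where n': "n = Suc n'" using n by (cases n) auto
  let ?f = "qdigit q u"
  have "u * q = (\<Sum>i<n. ?f i * q ^ i) * q" using dig_expand[OF q u] by simp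
  also have "\<dots> = (\<Sum>i<n'. ?f i * q ^ Suc i) + ?f n' * q ^ n"
    by (simp add: n' sum_distrib_right sum_distrib_left algebra_simps)
  also have "rot q n u = ?f n' + (\<Sum>i<n'. ?f i * q ^ Suc i)"
    unfolding rot_def n' sum.lessThan_Suc_shift by simp
  moreover have "?f n' * q ^ n = ?f n' + ?f n' * (q ^ n - 1)"
  proof -
    have "q ^ n \<ge> 1" using q by simp
    thus ?thesis by (simp add: diff_mult_distrib2)
  qed
  ultimately show ?thesis using n' by simp
qed

lemma rot_wt:
  assumes q: "0 < q" and n: "1 \<le> n"
  shows "wtq q n (rot q n u) = wtq q n u"
proof -
  obtain n' where n': "n = Suc n'" using n by (cases n) auto
  have "wtq q n (rot q n u) = (\<Sum>i<n. if i = 0 then qdigit q u (n - 1) else qdigit q u (i - 1))"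
    unfolding wtq_def using rot_digits[OF q] by simp
  also have "\<dots> = qdigit q u n' + (\<Sum>i<n'. qdigit q u i)"
    unfolding n' sum.lessThan_Suc_shift by simp
  also have "\<dots> = wtq q n u" unfolding wtq_def n' by simp
  finally show ?thesis .
qed

lemma rot_O:
  assumes q: "0 < q" and m: "1 \<le> m"
  shows "Osum q (2 * m) (rot q (2 * m) u) = Esum q (2 * m) u"
  unfolding Osum_alt Esum_alt using rot_digits[OF q, of _ "2 * m" u] by simp

lemma rot_E:
  assumes q: "0 < q" and m: "1 \<le> m"
  shows "Esum q (2 * m) (rot q (2 * m) u) = Osum q (2 * m) u"
proof -
  obtain m' where m': "m = Suc m'" using m by (cases m) auto
  have "Esum q (2 * m) (rot q (2 * m) u) = (\<Sum>j<m. if j = 0 then qdigit q u (2 * m - 1) else qdigit q u (2 * j - 1))"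
    unfolding Esum_alt using rot_digits[OF q, of _ "2 * m" u] by (intro sum.cong) auto
  also have "\<dots> = qdigit q u (2 * m' + 1) + (\<Sum>j<m'. qdigit q u (2 * j + 1))"
    unfolding m' sum.lessThan_Suc_shift by simp
  also have "\<dots> = Osum q (2 * m) u" unfolding Osum_alt m' by simp
  finally show ?thesis .
qed

lemma rot_Dd: "0 < q \<Longrightarrow> 1 \<le> m \<Longrightarrow> Dd q (2 * m) (rot q (2 * m) u) = Dd q (2 * m) u"
  unfolding Dd_def using rot_O rot_E by (simp add: abs_minus_commute)


lemma qd_le: "0 < q \<Longrightarrow> qdigit q u i \<le> q - 1"
  using qd_lt[of q u i] by linarith

lemma qd_zero: "qdigit q 0 i = 0" by (simp add: qdigit_def)

lemma comp_sum:
  assumes q: "0 < q" and u: "u \<le> q ^ n - 1"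
  shows "q ^ n - 1 - u = (\<Sum>i<n. (q - 1 - qdigit q u i) * q ^ i)"
proof -
  have un: "u < q ^ n" using u q by (metis One_nat_def Suc_pred diff_Suc_1 le_imp_less_Suc nat_zero_less_power_iff)
  have "(\<Sum>i<n. (q - 1 - qdigit q u i) * q ^ i) + (\<Sum>i<n. qdigit q u i * q ^ i)
      = (\<Sum>i<n. (q - 1) * q ^ i)"
    unfolding sum.distrib[symmetric]
  proof (intro sum.cong refl)
    fix i have "qdigit q u i \<le> q - 1" using qd_lt[OF q, of u i] by simp
    hence e: "q - 1 - qdigit q u i + qdigit q u i = q - 1" by simp
    show "(q - 1 - qdigit q u i) * q ^ i + qdigit q u i * q ^ i = (q - 1) * q ^ i"
      by (metis add_mult_distrib e)
  qed
  hence "(\<Sum>i<n. (q - 1 - qdigit q u i) * q ^ i) + u = q ^ n - 1"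
    using dig_expand[OF q un] by (simp only: allmax)
  thus ?thesis by simp
qed

lemma comp_digits:
  assumes q: "0 < q" and u: "u \<le> q ^ n - 1" and i: "i < n"
  shows "qdigit q (q ^ n - 1 - u) i = q - 1 - qdigit q u i"
  unfolding comp_sum[OF q u] by (rule dig_extract) (use q i in auto)

lemma sum_comp: "(\<forall>i\<in>A. f i \<le> K) \<Longrightarrow> finite A \<Longrightarrow> (\<Sum>i\<in>A. K - f i) = card A * K - sum f A"
proof -
  assume a: "\<forall>i\<in>A. f i \<le> K" "finite A"
  have "(\<Sum>i\<in>A. K - f i) + sum f A = (\<Sum>i\<in>A. K)"
    unfolding sum.distrib[symmetric] using a by (intro sum.cong) auto
  thus ?thesis by simp
qed

lemma wt_le: "0 < q \<Longrightarrow> wtq q n u \<le> n * (q - 1)"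
proof -
  assume q: "0 < q"
  have "wtq q n u \<le> (\<Sum>i<n. q - 1)" unfolding wtq_def
    by (intro sum_mono) (use qd_le[OF q] in auto)
  thus ?thesis by simp
qed

lemma wt_comp:
  assumes q: "0 < q" and u: "u \<le> q ^ n - 1"
  shows "wtq q n (q ^ n - 1 - u) = n * (q - 1) - wtq q n u"
proof -
  have "wtq q n (q ^ n - 1 - u) = (\<Sum>i<n. q - 1 - qdigit q u i)"
    unfolding wtq_def using comp_digits[OF q u] by simp
  also have "\<dots> = n * (q - 1) - wtq q n u"
    unfolding wtq_def by (subst sum_comp) (use qd_le[OF q] in auto)
  finally show ?thesis .
qed

lemma O_le: "0 < q \<Longrightarrow> Osum q (2 * m) u \<le> m * (q - 1)"
proof -
  assume q: "0 < q"
  have "Osum q (2 * m) u \<le> (\<Sum>j<m. q - 1)" unfolding Osum_alt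
    by (intro sum_mono) (use qd_le[OF q] in auto)
  thus ?thesis by simp
qed

lemma E_le: "0 < q \<Longrightarrow> Esum q (2 * m) u \<le> m * (q - 1)"
proof -
  assume q: "0 < q"
  have "Esum q (2 * m) u \<le> (\<Sum>j<m. q - 1)" unfolding Esum_alt
    by (intro sum_mono) (use qd_le[OF q] in auto)
  thus ?thesis by simp
qed

lemma O_comp:
  assumes q: "0 < q" and u: "u \<le> q ^ (2 * m) - 1"
  shows "Osum q (2 * m) (q ^ (2 * m) - 1 - u) = m * (q - 1) - Osum q (2 * m) u"
proof -
  have "Osum q (2 * m) (q ^ (2 * m) - 1 - u) = (\<Sum>j<m. q - 1 - qdigit q u (2 * j + 1))"
    unfolding Osum_alt using comp_digits[OF q u] by simp
  also have "\<dots> = m * (q - 1) - Osum q (2 * m) u"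
    unfolding Osum_alt by (subst sum_comp) (use qd_le[OF q] in auto)
  finally show ?thesis .
qed

lemma E_comp:
  assumes q: "0 < q" and u: "u \<le> q ^ (2 * m) - 1"
  shows "Esum q (2 * m) (q ^ (2 * m) - 1 - u) = m * (q - 1) - Esum q (2 * m) u"
proof -
  have "Esum q (2 * m) (q ^ (2 * m) - 1 - u) = (\<Sum>j<m. q - 1 - qdigit q u (2 * j))"
    unfolding Esum_alt using comp_digits[OF q u] by simp
  also have "\<dots> = m * (q - 1) - Esum q (2 * m) u"
    unfolding Esum_alt by (subst sum_comp) (use qd_le[OF q] in auto)
  finally show ?thesis .
qed

lemma Dd_comp:
  assumes q: "0 < q" and u: "u \<le> q ^ (2 * m) - 1"
  shows "Dd q (2 * m) (q ^ (2 * m) - 1 - u) = Dd q (2 * m) u"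
  unfolding Dd_def O_comp[OF q u] E_comp[OF q u] using O_le[OF q, of m u] E_le[OF q, of m u]
  by (simp add: of_nat_diff abs_minus_commute)

lemma wt0:
  assumes q: "0 < q" and u: "u < q ^ n" and w: "wtq q n u = 0"
  shows "u = 0"
proof -
  have "\<forall>i\<in>{..<n}. qdigit q u i = 0" using w unfolding wtq_def by simp
  hence "(\<Sum>i<n. qdigit q u i * q ^ i) = 0" by simp
  thus ?thesis using dig_expand[OF q u] by simp
qed

lemma wt_zero_num: "wtq q n 0 = 0" by (simp add: wtq_def qd_zero)

lemma wt_N: "0 < q \<Longrightarrow> wtq q n (q ^ n - 1) = n * (q - 1)"
  using wt_comp[of q 0 n] by (simp add: wt_zero_num)

lemma wt_max:
  assumes q: "0 < q" and u: "u \<le> q ^ n - 1" and w: "wtq q n u = n * (q - 1)"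
  shows "u = q ^ n - 1"
proof -
  have "wtq q n (q ^ n - 1 - u) = 0" using wt_comp[OF q u] w by simp
  moreover have "q ^ n - 1 - u < q ^ n" using q by simp
  ultimately have "q ^ n - 1 - u = 0" using wt0[OF q] by blast
  thus ?thesis using u by simp
qed

lemma Dd_N: "0 < q \<Longrightarrow> Dd q (2 * m) (q ^ (2 * m) - 1) = 0"
  using Dd_comp[of q 0 m] by (simp add: Dd_def Osum_def Esum_def qd_zero)

lemma Dd_props:
  assumes q: "0 < q"
  shows "Dd q (2 * m) u \<le> m * (q - 1) \<and> (even (Dd q (2 * m) u) \<longleftrightarrow> even (wtq q (2 * m) u))"
proof -
  have a: "Osum q (2 * m) u \<le> m * (q - 1)" "Esum q (2 * m) u \<le> m * (q - 1)"
    using O_le[OF q] E_le[OF q] by auto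
  show ?thesis unfolding wt_OE Dd_def using a
    by (cases "Osum q (2 * m) u \<le> Esum q (2 * m) u") (auto simp: of_nat_diff nat_diff_distrib)
qed

lemma coprime_pow: "0 < (q::nat) \<Longrightarrow> 1 \<le> n \<Longrightarrow> coprime (q ^ n - 1) (q ^ t)"
proof -
  assume q: "0 < q" and n: "1 \<le> n"
  have "coprime (q ^ n - 1) (q ^ n)" by (rule coprime_diff_one_left_nat) (use q in simp)
  moreover have "q ^ n = q * q ^ (n - 1)" using n by (cases n) auto
  ultimately have "coprime (q ^ n - 1) (q * q ^ (n - 1))" by metis
  hence "coprime (q ^ n - 1) q" using coprime_mult_right_iff by blast
  thus ?thesis by simp
qed

lemma inv_digits:
  assumes q: "0 < q" and m: "1 \<le> m"
  shows "0 < u \<Longrightarrow> u < q ^ (2 * m) - 1 \<Longrightarrow> 0 < v \<Longrightarrow> v < q ^ (2 * m) - 1 \<Longrightarrow>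
    int (q ^ (2 * m) - 1) dvd int v - int u * int q ^ t \<Longrightarrow>
    wtq q (2 * m) v = wtq q (2 * m) u \<and> Dd q (2 * m) v = Dd q (2 * m) u"
proof (induction t arbitrary: u)
  case 0
  define N where "N = q ^ (2 * m) - 1"
  have vN: "v < N" "u < N" "int N dvd int v - int u" using 0 by (simp_all add: N_def)
  have "v = u"
  proof (rule ccontr)
    assume "v \<noteq> u"
    hence "int v - int u \<noteq> 0" by simp
    hence "\<bar>int N\<bar> \<le> \<bar>int v - int u\<bar>" using vN(3) by (intro dvd_imp_le_int) simp_all
    thus False using vN(1,2) by linarith
  qed
  thus ?case by simp
next
  case (Suc t)
  let ?N = "q ^ (2 * m) - 1"
  let ?w = "rot q (2 * m) u"
  have n1: "1 \<le> 2 * m" using m by simp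
  have uN: "u < q ^ (2 * m)" using Suc.prems by simp
  have req: "u * q = ?w + qdigit q u (2 * m - 1) * ?N" by (rule rot_eq[OF q n1 uN])
  have wle: "?w \<le> ?N" by (rule rot_le[OF q])
  have nd: "\<not> ?N dvd u * q"
  proof
    assume "?N dvd u * q"
    hence "?N dvd u" using coprime_pow[OF q n1, of 1] coprime_dvd_mult_left_iff by auto
    thus False using Suc.prems by (auto dest: dvd_imp_le)
  qed
  have w0: "0 < ?w"
  proof (rule ccontr)
    assume "\<not> 0 < ?w" hence "?w = 0" by simp
    hence "?N dvd u * q" using req by simp
    thus False using nd by simp
  qed
  have wN: "?w < ?N"
  proof (rule ccontr)
    assume "\<not> ?w < ?N" hence "?w = ?N" using wle by simp
    hence "u * q = ?N * (1 + qdigit q u (2 * m - 1))" using req by (simp add: algebra_simps)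
    hence "?N dvd u * q" by simp
    thus False using nd by simp
  qed
  have eq: "int v - int ?w * int q ^ t
      = (int v - int u * int q ^ Suc t) + int ?N * (int (qdigit q u (2 * m - 1)) * int q ^ t)"
  proof -
    have "int u * int q = int ?w + int (qdigit q u (2 * m - 1)) * int ?N"
      using arg_cong[OF req, of int] by simp
    hence "int u * int q ^ Suc t = (int ?w + int (qdigit q u (2 * m - 1)) * int ?N) * int q ^ t"
      by (simp add: mult.assoc[symmetric] mult.commute[of "int q"])
    thus ?thesis by (simp add: algebra_simps)
  qed
  have d1: "int ?N dvd int v - int u * int q ^ Suc t" using Suc.prems(5) .
  have d2: "int ?N dvd int ?N * (int (qdigit q u (2 * m - 1)) * int q ^ t)" by (rule dvd_triv_left)
  have "int ?N dvd int v - int ?w * int q ^ t" unfolding eq by (rule dvd_add[OF d1 d2])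
  hence "wtq q (2 * m) v = wtq q (2 * m) ?w \<and> Dd q (2 * m) v = Dd q (2 * m) ?w"
    using Suc.IH[OF w0 wN] Suc.prems by simp
  thus ?case using rot_wt[OF q n1] rot_Dd[OF q m] by simp
qed



locale ffc =
  fixes q n :: nat and \<alpha> :: "'a::{field,finite}"
  assumes cardF: "card (UNIV::'a set) = q ^ n"
    and n1: "n \<ge> 2" and q2: "q \<ge> 2"
    and prim: "primitive_elem \<alpha>"
    and frob: "\<And>x y::'a. (x + y) ^ q = x ^ q + y ^ q"
    and qz: "of_nat q = (0::'a)"
begin

definition NN where "NN = q ^ n - 1"

lemma qn_ge: "q ^ n \<ge> 2"
proof -
  have "q ^ 1 \<le> q ^ n" using n1 q2 by (intro power_increasing) auto
  thus ?thesis using q2 by simp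
qed

lemma NN_pos: "NN \<ge> 1" using qn_ge by (simp add: NN_def)

lemma NN_Suc: "Suc NN = q ^ n" using qn_ge by (simp add: NN_def)

lemma of_nat_Q: "of_nat (q ^ n) = (0::'a)"
  using n1 qz by (simp add: of_nat_power power_0_left)

lemma of_nat_NN: "of_nat NN = (-1::'a)"
proof -
  have "of_nat (Suc NN) = (0::'a)" using of_nat_Q NN_Suc by simp
  thus ?thesis by (simp add: eq_neg_iff_add_eq_0 add.commute)
qed

lemma sum_UNIV_const: "(\<Sum>x\<in>(UNIV::'a set). c) = (0::'a)"
  using qz n1 by (simp add: cardF power_0_left)

lemma card_nz: "card (UNIV - {0::'a}) = NN"
  using cardF by (simp add: card_Diff_singleton NN_def)

lemma pow_NN: assumes "(x::'a) \<noteq> 0" shows "x ^ NN = 1"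
proof -
  have "(\<Prod>y\<in>UNIV-{0}. x * y) = x ^ card (UNIV - {0::'a}) * \<Prod>(UNIV-{0})"
    by (simp add: prod.distrib)
  also have "(\<Prod>y\<in>UNIV-{0}. x * y) = (\<Prod>y\<in>UNIV-{0::'a}. y)"
    by (rule prod.reindex_bij_witness[of _ "\<lambda>y. y / x" "\<lambda>y. x * y"]) (use assms in auto)
  finally have "x ^ NN * \<Prod>(UNIV-{0::'a}) = \<Prod>(UNIV-{0::'a})" using card_nz by simp
  moreover have "\<Prod>(UNIV-{0::'a}) \<noteq> 0" by (simp add: prod_zero_iff)
  ultimately show ?thesis by simp
qed

lemma pow_Q: "(x::'a) ^ (q ^ n) = x"
proof (cases "x = 0")
  case True thus ?thesis using qn_ge q2 by (simp add: power_0_left)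
next
  case False
  have "x ^ (q ^ n) = x ^ Suc NN" using NN_Suc by simp
  also have "\<dots> = x" using pow_NN[OF False] by simp
  finally show ?thesis .
qed

lemma qn_ge4: "q ^ n \<ge> 4"
proof -
  have "q ^ 2 \<le> q ^ n" using n1 q2 by (intro power_increasing) auto
  moreover have "q ^ 2 \<ge> 2 ^ 2" using q2 by (intro power_mono) auto
  ultimately show ?thesis by simp
qed

lemma alpha_nz: "\<alpha> \<noteq> 0"
proof -
  have "\<not> UNIV \<subseteq> {0, 1::'a}"
  proof
    assume "UNIV \<subseteq> {0, 1::'a}"
    hence "card (UNIV::'a set) \<le> card {0, 1::'a}" by (intro card_mono) auto
    also have "\<dots> \<le> 2" by (simp add: card_insert_le_m1)
    finally show False using cardF qn_ge4 by simp
  qed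
  then obtain x :: 'a where x: "x \<noteq> 0" "x \<noteq> 1" by auto
  then obtain i where "x = \<alpha> ^ i" using prim unfolding primitive_elem_def by auto
  thus ?thesis using x by (cases i) auto
qed

lemma alpha_NN: "\<alpha> ^ NN = 1" using pow_NN alpha_nz by simp

lemma alpha_pow_mod: "\<alpha> ^ (i mod NN) = \<alpha> ^ i"
proof -
  have "\<alpha> ^ i = \<alpha> ^ (NN * (i div NN) + i mod NN)" by (metis div_mult_mod_eq mult.commute)
  also have "\<dots> = \<alpha> ^ (i mod NN)" by (simp only: power_add power_mult alpha_NN power_one mult_1)
  finally show ?thesis by (rule sym)
qed

lemma alpha_image: "(\<lambda>i. \<alpha> ^ i) ` {..<NN} = UNIV - {0}"
proof
  show "(\<lambda>i. \<alpha> ^ i) ` {..<NN} \<subseteq> UNIV - {0}" using alpha_nz by auto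
  show "UNIV - {0} \<subseteq> (\<lambda>i. \<alpha> ^ i) ` {..<NN}"
  proof
    fix x :: 'a assume "x \<in> UNIV - {0}"
    then obtain i where "x = \<alpha> ^ i" using prim unfolding primitive_elem_def by auto
    hence "x = \<alpha> ^ (i mod NN)" by (simp add: alpha_pow_mod)
    moreover have "i mod NN < NN" using NN_pos by simp
    ultimately show "x \<in> (\<lambda>i. \<alpha> ^ i) ` {..<NN}" by auto
  qed
qed

lemma alpha_inj: "inj_on (\<lambda>i. \<alpha> ^ i) {..<NN}"
  by (rule eq_card_imp_inj_on) (simp_all add: alpha_image card_nz)

lemma alpha_pow_eq1: "\<alpha> ^ e = 1 \<longleftrightarrow> NN dvd e"
proof
  assume "\<alpha> ^ e = 1"
  hence "\<alpha> ^ (e mod NN) = \<alpha> ^ 0" by (simp add: alpha_pow_mod)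
  hence "e mod NN = 0" using alpha_inj NN_pos unfolding inj_on_def by (metis lessThan_iff mod_less_divisor zero_less_iff_neq_zero le_less_trans less_one not_one_le_zero)
  thus "NN dvd e" by auto
next
  assume "NN dvd e" thus "\<alpha> ^ e = 1" by (auto simp: power_mult alpha_NN)
qed

lemma sum_split0: "(\<Sum>x\<in>UNIV. f x) = f (0::'a) + (\<Sum>x\<in>UNIV-{0}. f x)"
  by (simp add: sum.remove)

lemma sum_alpha: "(\<Sum>i<NN. f (\<alpha> ^ i)) = (\<Sum>x\<in>UNIV-{0::'a}. f x)"
  using sum.reindex[OF alpha_inj, of f] alpha_image by simp

lemma psum: "(\<Sum>x\<in>(UNIV::'a set). x ^ e) = (if 0 < e \<and> NN dvd e then -1 else 0)"
proof (cases "e = 0")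
  case True thus ?thesis using qz n1 by (simp add: cardF power_0_left)
next
  case e: False
  show ?thesis
  proof (cases "NN dvd e")
    case True
    have "(\<Sum>x\<in>(UNIV::'a set). x ^ e) = (\<Sum>x\<in>UNIV-{0::'a}. 1)"
      using e True by (subst sum_split0) (auto intro!: sum.cong simp: power_mult pow_NN elim!: dvdE)
    also have "\<dots> = -1" using card_nz of_nat_NN by simp
    finally show ?thesis using e True by simp
  next
    case False
    have a: "\<alpha> ^ e \<noteq> 1" using False alpha_pow_eq1 by simp
    have "(\<Sum>x\<in>(UNIV::'a set). x ^ e) = (\<Sum>x\<in>(UNIV::'a set). (\<alpha> * x) ^ e)"
      by (rule sum.reindex_bij_witness[of _ "\<lambda>y. \<alpha> * y" "\<lambda>y. y / \<alpha>"]) (use alpha_nz in auto)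
    also have "\<dots> = \<alpha> ^ e * (\<Sum>x\<in>(UNIV::'a set). x ^ e)"
      by (simp add: power_mult_distrib sum_distrib_left)
    finally have "(1 - \<alpha> ^ e) * (\<Sum>x\<in>(UNIV::'a set). x ^ e) = 0" by (simp add: algebra_simps)
    thus ?thesis using a False by simp
  qed
qed

lemma frob_pow: "((x::'a) + y) ^ (q ^ t) = x ^ (q ^ t) + y ^ (q ^ t)"
proof (induction t)
  case (Suc t)
  have "(x + y) ^ (q ^ Suc t) = ((x + y) ^ (q ^ t)) ^ q" by (simp add: power_mult[symmetric] mult.commute)
  also have "\<dots> = (x ^ (q ^ t)) ^ q + (y ^ (q ^ t)) ^ q" using Suc frob by simp
  finally show ?case by (simp add: power_mult[symmetric] mult.commute)
qed simp

lemma frob_sum: "(\<Sum>i\<in>A. f i :: 'a) ^ (q ^ t) = (\<Sum>i\<in>A. f i ^ (q ^ t))"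
proof (induction A rule: infinite_finite_induct)
  case empty show ?case using q2 by (simp add: power_0_left)
next
  case (insert x F) thus ?case by (simp add: frob_pow)
qed (use q2 in \<open>simp add: power_0_left\<close>)

lemma Fq_pow: "(x::'a) \<in> Fq q \<Longrightarrow> x ^ (q ^ t) = x"
proof (induction t)
  case (Suc t)
  have "x ^ (q ^ Suc t) = (x ^ q) ^ (q ^ t)" by (simp add: power_mult[symmetric] mult.commute)
  thus ?case using Suc by (simp add: Fq_def)
qed simp

definition Tr :: "'a \<Rightarrow> 'a" where "Tr y = (\<Sum>t<n. y ^ (q ^ t))"

lemma Tr_Fq: "Tr y \<in> Fq q"
proof -
  have "Tr y ^ q = (\<Sum>t<n. y ^ (q ^ Suc t))"
    using frob_sum[of "\<lambda>t. y ^ (q ^ t)" "{..<n}" 1] by (simp add: Tr_def power_mult[symmetric] mult.commute)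
  also have "\<dots> = (\<Sum>t<Suc n. y ^ (q ^ t)) - y" using sum.lessThan_Suc_shift[of "\<lambda>t. y ^ (q ^ t)" n] by simp
  also have "\<dots> = Tr y" by (simp add: Tr_def pow_Q)
  finally show ?thesis by (simp add: Fq_def)
qed

lemma Tr_nz: "\<exists>y. Tr y \<noteq> 0"
proof (rule ccontr)
  assume "\<not> ?thesis"
  hence all: "\<forall>y. Tr y = 0" by simp
  define P :: "'a poly" where "P = (\<Sum>t<n. monom 1 (q ^ t))"
  have ev: "poly P y = Tr y" for y by (simp add: P_def Tr_def poly_sum poly_monom)
  have inj: "q ^ s = q ^ t \<longleftrightarrow> s = t" for s t using q2 by (simp add: power_inject_exp)
  have "coeff P (q ^ (n - 1)) = 1"
    using n1 by (simp add: P_def coeff_sum coeff_monom inj)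
  hence P0: "P \<noteq> 0" by auto
  have "degree P \<le> q ^ (n - 1)"
    unfolding P_def by (rule degree_sum_le) (use q2 n1 in \<open>auto simp: degree_monom_eq intro: power_increasing\<close>)
  moreover have "card {x. poly P x = 0} \<le> degree P" by (rule card_poly_roots_bound[OF P0])
  moreover have "{x. poly P x = 0} = UNIV" using all ev by auto
  moreover have "q ^ (n - 1) < q ^ n" using q2 n1 by (intro power_strict_increasing) auto
  ultimately show False using cardF by simp
qed


definition Aco :: "('a \<Rightarrow> 'a) \<Rightarrow> nat \<Rightarrow> 'a" where
  "Aco c u = (\<Sum>x\<in>UNIV. c x * x ^ u)"

definition Code :: "nat set \<Rightarrow> ('a \<Rightarrow> 'a) set" where
  "Code T = {c \<in> words q. \<forall>u\<in>T. Aco c u = 0}"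

definition perp :: "nat set \<Rightarrow> nat set" where
  "perp T = {s. s \<le> NN \<and> NN - s \<notin> T}"

lemma geo: assumes "(z::'a) ^ NN = 1"
  shows "(\<Sum>j<NN. z ^ Suc j) = (if z = 1 then -1 else 0)"
proof (cases "z = 1")
  case True thus ?thesis using of_nat_NN by simp
next
  case False
  have "(\<Sum>j<NN. z ^ Suc j) = z * (\<Sum>j<NN. z ^ j)" by (simp add: sum_distrib_left)
  also have "(\<Sum>j<NN. z ^ j) = (1 - z ^ NN) / (1 - z)" using False by (simp add: sum_gp_strict)
  finally show ?thesis using assms False by simp
qed

definition G :: "'a \<Rightarrow> 'a \<Rightarrow> 'a" where
  "G x y = (\<Sum>j<NN. y ^ (NN - Suc j) * x ^ Suc j)"

lemma G_x0: "G 0 y = 0" by (simp add: G_def)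

lemma G_y0: assumes "x \<noteq> 0" shows "G x 0 = 1"
proof -
  have "G x 0 = (\<Sum>j<NN. if j = NN - 1 then x ^ Suc j else 0)"
    unfolding G_def using NN_pos by (intro sum.cong) (auto simp: power_0_left simp del: power_Suc)
  also have "\<dots> = x ^ Suc (NN - 1)" using NN_pos by (simp add: sum.delta del: power_Suc)
  also have "Suc (NN - 1) = NN" using NN_pos by simp
  finally show ?thesis using pow_NN assms by simp
qed

lemma G_xy: assumes "x \<noteq> 0" "y \<noteq> 0" shows "G x y = (if x = y then -1 else 0)"
proof -
  have "y ^ (NN - Suc j) * x ^ Suc j = (x / y) ^ Suc j" if "j < NN" for j
  proof -
    have e: "NN - Suc j + Suc j = NN" using that by simp
    have "y ^ (NN - Suc j) * y ^ Suc j = 1" using pow_NN[OF assms(2)]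
      by (simp only: power_add[symmetric] e)
    hence "y ^ (NN - Suc j) = inverse (y ^ Suc j)" using assms(2) by (simp add: field_simps)
    thus ?thesis by (simp add: power_divide divide_inverse mult.commute power_mult_distrib power_inverse del: power_Suc)
  qed
  hence "G x y = (\<Sum>j<NN. (x / y) ^ Suc j)" unfolding G_def by simp
  also have "\<dots> = (if x / y = 1 then -1 else 0)"
    by (rule geo) (use assms pow_NN in \<open>simp add: power_divide\<close>)
  finally show ?thesis using assms by simp
qed

lemma interp: "c x = c 0 - (\<Sum>j<NN. Aco c (NN - Suc j) * x ^ Suc j)"
proof -
  have "(\<Sum>j<NN. Aco c (NN - Suc j) * x ^ Suc j) = (\<Sum>y\<in>UNIV. c y * G x y)"
    unfolding Aco_def G_def by (simp add: sum_distrib_left sum_distrib_right sum.swap[of _ "{..<NN}"] mult.assoc)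
  also have "\<dots> = (if x = 0 then 0 else c 0 - c x)"
  proof (cases "x = 0")
    case True thus ?thesis by (simp add: G_x0)
  next
    case False
    have "c y * G x y = (if y = 0 then c y else 0) - (if y = x then c y else 0)" for y
      using False G_y0 G_xy by auto
    hence "(\<Sum>y\<in>UNIV. c y * G x y) = (\<Sum>y\<in>UNIV. (if y = 0 then c y else 0) - (if y = x then c y else 0))"
      by simp
    also have "\<dots> = c 0 - c x" by (simp add: sum_subtractf sum.delta')
    finally show ?thesis using False by simp
  qed
  finally show ?thesis by auto
qed


lemma coprime_NN_q: "coprime NN (q ^ t)"
proof -
  have "coprime NN (q ^ n)" unfolding NN_def using qn_ge q2 by (intro coprime_diff_one_left_nat) simp
  moreover have "q ^ n = q * q ^ (n - 1)" using n1 by (metis Suc_diff_1 not_less_eq_eq zero_less_Suc le_0_eq not_less0 power_Suc less_le_trans One_nat_def numeral_2_eq_2 Suc_le_lessD)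
  ultimately have "coprime NN (q * q ^ (n - 1))" by metis
  hence "coprime NN q" using coprime_mult_right_iff by blast
  thus ?thesis by simp
qed

lemma psum_zero:
  assumes Tsub: "T \<subseteq> {..NN}" and T0: "0 \<in> T"
  and inv: "\<And>u v t. u \<in> T \<Longrightarrow> 0 < u \<Longrightarrow> u < NN \<Longrightarrow> 0 < v \<Longrightarrow> v < NN \<Longrightarrow>
              int NN dvd int v - int u * int q ^ t \<Longrightarrow> v \<in> T"
  and u: "u \<in> T" and k: "k \<in> perp T" and t: "t < n"
  shows "\<not> (0 < k * q ^ t + u \<and> NN dvd k * q ^ t + u)"
proof
  assume H: "0 < k * q ^ t + u \<and> NN dvd k * q ^ t + u"
  have kle: "k \<le> NN" and kT: "NN - k \<notin> T" using k by (auto simp: perp_def)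
  have ule: "u \<le> NN" using u Tsub by auto
  have "k \<noteq> NN" using kT T0 by auto
  hence klt: "k < NN" using kle by simp
  show False
  proof (cases "k = 0")
    case True
    hence "0 < u" "NN dvd u" using H by auto
    hence "NN \<le> u" by (simp add: dvd_imp_le)
    hence "u = NN" using ule by simp
    thus False using kT True u by simp
  next
    case k0: False
    show False
    proof (cases "u = 0 \<or> u = NN")
      case True
      hence "NN dvd k * q ^ t" using H by (auto simp: dvd_add_left_iff)
      hence "NN dvd k" using coprime_NN_q coprime_dvd_mult_left_iff by blast
      thus False using k0 klt by (auto dest: dvd_imp_le)
    next
      case False
      hence u0: "0 < u" "u < NN" using ule by auto
      from H obtain X where X: "k * q ^ t + u = NN * X" by (auto elim!: dvdE)
      have qn: "int q ^ t * int q ^ (n - t) = int NN + 1"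
      proof -
        have "int q ^ t * int q ^ (n - t) = int q ^ n" using t by (simp add: power_add[symmetric])
        also have "\<dots> = int NN + 1" using NN_Suc by (metis of_nat_Suc of_nat_power add.commute)
        finally show ?thesis .
      qed
      have hu: "int u = int NN * int X - int k * int q ^ t" using arg_cong[OF X, of int] by simp
      have hv: "int (NN - k) = int NN - int k" using kle by simp
      have "int (NN - k) - int u * int q ^ (n - t) = int NN * (1 + int k - int X * int q ^ (n - t))"
      proof -
        have "int (NN - k) - int u * int q ^ (n - t)
            = int NN - int k - int NN * int X * int q ^ (n - t) + int k * (int q ^ t * int q ^ (n - t))"
          by (simp add: hu hv algebra_simps)
        also have "\<dots> = int NN * (1 + int k - int X * int q ^ (n - t))" by (simp add: qn algebra_simps)
        finally show ?thesis .
      qed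
      hence "int NN dvd int (NN - k) - int u * int q ^ (n - t)" by simp
      hence "NN - k \<in> T" using inv[OF u u0, of "NN - k" "n - t"] k0 klt by simp
      thus False using kT by simp
    qed
  qed
qed

lemma dual_Code:
  assumes Tsub: "T \<subseteq> {..NN}" and T0: "0 \<in> T"
  and inv: "\<And>u v t. u \<in> T \<Longrightarrow> 0 < u \<Longrightarrow> u < NN \<Longrightarrow> 0 < v \<Longrightarrow> v < NN \<Longrightarrow>
              int NN dvd int v - int u * int q ^ t \<Longrightarrow> v \<in> T"
  shows "dual_code q (Code T) = Code (perp T)"
proof
  show "Code (perp T) \<subseteq> dual_code q (Code T)"
  proof
    fix d assume d: "d \<in> Code (perp T)"
    have "(\<Sum>x\<in>UNIV. c x * d x) = 0" if c: "c \<in> Code T" for c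
    proof -
      have cA: "u \<in> T \<Longrightarrow> Aco c u = 0" for u using c by (auto simp: Code_def)
      have dA: "s \<in> perp T \<Longrightarrow> Aco d s = 0" for s using d by (auto simp: Code_def)
      have "(\<Sum>x\<in>UNIV. c x * d x) = (\<Sum>x\<in>UNIV. (c 0 - (\<Sum>j<NN. Aco c (NN - Suc j) * x ^ Suc j)) * d x)"
        by (subst interp[of c]) simp
      also have "\<dots> = (\<Sum>x\<in>UNIV. c 0 * d x) - (\<Sum>x\<in>UNIV. (\<Sum>j<NN. Aco c (NN - Suc j) * x ^ Suc j) * d x)"
        by (simp add: left_diff_distrib sum_subtractf)
      also have "(\<Sum>x\<in>UNIV. (\<Sum>j<NN. Aco c (NN - Suc j) * x ^ Suc j) * d x)
          = (\<Sum>x\<in>UNIV. \<Sum>j<NN. Aco c (NN - Suc j) * (d x * x ^ Suc j))"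
        by (simp only: sum_distrib_right) (simp add: mult_ac)
      also have "\<dots> = (\<Sum>j<NN. \<Sum>x\<in>UNIV. Aco c (NN - Suc j) * (d x * x ^ Suc j))"
        by (rule sum.swap)
      also have "\<dots> = (\<Sum>j<NN. Aco c (NN - Suc j) * Aco d (Suc j))"
        by (simp add: Aco_def sum_distrib_left)
      also have "(\<Sum>x\<in>UNIV. c 0 * d x) = c 0 * Aco d 0"
        by (simp add: Aco_def sum_distrib_left)
      also have "(\<Sum>j<NN. Aco c (NN - Suc j) * Aco d (Suc j)) = 0"
      proof (intro sum.neutral ballI)
        fix j assume "j \<in> {..<NN}"
        hence "Suc j \<le> NN" by simp
        thus "Aco c (NN - Suc j) * Aco d (Suc j) = 0"
          using cA[of "NN - Suc j"] dA[of "Suc j"] by (auto simp: perp_def)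
      qed
      also have "c 0 * Aco d 0 = 0"
      proof (cases "0 \<in> perp T")
        case True thus ?thesis using dA by simp
      next
        case False
        hence "NN \<in> T" by (simp add: perp_def)
        hence "Aco c NN = 0" "Aco c 0 = 0" using cA T0 by auto
        moreover have "Aco c NN = Aco c 0 - c 0"
        proof -
          have "Aco c NN = (\<Sum>x\<in>UNIV-{0}. c x)"
            unfolding Aco_def using NN_pos by (subst sum_split0) (auto simp: pow_NN intro!: sum.cong)
          moreover have "Aco c 0 = c 0 + (\<Sum>x\<in>UNIV-{0}. c x)"
            unfolding Aco_def by (subst sum_split0) simp
          ultimately show ?thesis by simp
        qed
        ultimately show ?thesis by simp
      qed
      finally show ?thesis by simp
    qed
    thus "d \<in> dual_code q (Code T)" using d by (auto simp: dual_code_def Code_def)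
  qed
next
  show "dual_code q (Code T) \<subseteq> Code (perp T)"
  proof
    fix d assume d: "d \<in> dual_code q (Code T)"
    hence dw: "d \<in> words q" and orth: "\<And>c. c \<in> Code T \<Longrightarrow> (\<Sum>x\<in>UNIV. c x * d x) = 0"
      by (auto simp: dual_code_def)
    have "Aco d k = 0" if k: "k \<in> perp T" for k
    proof (rule ccontr)
      assume a0: "Aco d k \<noteq> 0"
      obtain y0 where y0: "Tr y0 \<noteq> 0" using Tr_nz by blast
      define lam where "lam = y0 / Aco d k"
      define c where "c = (\<lambda>x. Tr (lam * x ^ k))"
      have "c \<in> Code T"
      proof -
        have "c \<in> words q" by (simp add: c_def words_def Tr_Fq)
        moreover have "Aco c u = 0" if u: "u \<in> T" for u
        proof -
          have "Aco c u = (\<Sum>t<n. lam ^ (q ^ t) * (\<Sum>x\<in>UNIV. x ^ (k * q ^ t + u)))"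
            unfolding Aco_def c_def Tr_def
            by (simp add: sum_distrib_left sum_distrib_right sum.swap[of _ "{..<n}"] power_mult_distrib power_add power_mult mult_ac)
          also have "\<dots> = 0"
          proof (intro sum.neutral ballI)
            fix t assume "t \<in> {..<n}"
            hence "\<not> (0 < k * q ^ t + u \<and> NN dvd k * q ^ t + u)"
              using psum_zero[OF Tsub T0 inv u k, where t=t] by simp
            thus "lam ^ q ^ t * (\<Sum>x\<in>UNIV. x ^ (k * q ^ t + u)) = 0"
              by (simp only: psum) simp
          qed
          finally show ?thesis .
        qed
        ultimately show ?thesis by (simp add: Code_def)
      qed
      hence "(\<Sum>x\<in>UNIV. c x * d x) = 0" by (rule orth)
      moreover have "(\<Sum>x\<in>UNIV. c x * d x) = Tr y0"
      proof -
        have dq: "d x ^ (q ^ t) = d x" for x t using dw by (auto simp: words_def intro: Fq_pow)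
        have "(\<Sum>x\<in>UNIV. c x * d x) = (\<Sum>t<n. \<Sum>x\<in>UNIV. (lam * x ^ k * d x) ^ (q ^ t))"
          unfolding c_def Tr_def
          by (simp add: sum_distrib_right sum.swap[of _ "{..<n}"] power_mult_distrib dq)
        also have "\<dots> = (\<Sum>t<n. (\<Sum>x\<in>UNIV. lam * x ^ k * d x) ^ (q ^ t))"
          by (simp add: frob_sum)
        also have "(\<Sum>x\<in>UNIV. lam * x ^ k * d x) = y0"
        proof -
          have "(\<Sum>x\<in>UNIV. lam * x ^ k * d x) = lam * Aco d k"
            by (simp add: Aco_def sum_distrib_left mult_ac)
          thus ?thesis using a0 by (simp add: lam_def)
        qed
        finally show ?thesis by (simp add: Tr_def)
      qed
      ultimately show False using y0 by simp
    qed
    thus "d \<in> Code (perp T)" using dw by (simp add: Code_def)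
  qed
qed

end


context ffc
begin

definition Uset :: "nat \<Rightarrow> nat \<Rightarrow> nat set \<Rightarrow> nat set" where
  "Uset m r I = {u. 0 < u \<and> u \<le> NN \<and> (wtq q n u + r + 1 \<le> n * (q - 1) \<or>
      (wtq q n u + r = n * (q - 1) \<and> Dd q n u \<in> Mset q m r - I))}"

lemma ZrI_eq:
  assumes r: "r < n * (q - 1)"
  shows "ZrI q m n \<alpha> r I = (\<lambda>u. \<alpha> ^ u) ` Uset m r I"
proof -
  have th: "(\<exists>k\<in>Mset q m r - I. \<bar>int (Osum q n u) - int (Esum q n u)\<bar> = int k) \<longleftrightarrow> Dd q n u \<in> Mset q m r - I" for u
    unfolding Dd_def by (metis abs_ge_zero int_nat_eq of_nat_eq_iff)
  have u0: "wtq q n u + r = n * (q - 1) \<Longrightarrow> 0 < u" for u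
    using r wt_zero_num[of q n] by (cases "u = 0") auto
  have key: "x \<in> ZrI q m n \<alpha> r I \<longleftrightarrow> x \<in> (\<lambda>u. \<alpha> ^ u) ` Uset m r I" for x
  proof -
    have "x \<in> ZrI q m n \<alpha> r I \<longleftrightarrow>
      (\<exists>u. x = \<alpha> ^ u \<and> 0 < u \<and> u \<le> NN \<and> wtq q n u + r + 1 \<le> n * (q - 1)) \<or>
      (\<exists>k\<in>Mset q m r - I. \<exists>u. x = \<alpha> ^ u \<and> u \<le> NN \<and> wtq q n u + r = n * (q - 1)
           \<and> \<bar>int (Osum q n u) - int (Esum q n u)\<bar> = int k)"
      unfolding ZrI_def Zset_def Theta_def NN_def by blast
    also have "\<dots> \<longleftrightarrow> (\<exists>u. x = \<alpha> ^ u \<and> u \<in> Uset m r I)"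
    proof
      assume "(\<exists>u. x = \<alpha> ^ u \<and> 0 < u \<and> u \<le> NN \<and> wtq q n u + r + 1 \<le> n * (q - 1)) \<or>
      (\<exists>k\<in>Mset q m r - I. \<exists>u. x = \<alpha> ^ u \<and> u \<le> NN \<and> wtq q n u + r = n * (q - 1)
           \<and> \<bar>int (Osum q n u) - int (Esum q n u)\<bar> = int k)"
      thus "\<exists>u. x = \<alpha> ^ u \<and> u \<in> Uset m r I"
      proof
        assume "\<exists>u. x = \<alpha> ^ u \<and> 0 < u \<and> u \<le> NN \<and> wtq q n u + r + 1 \<le> n * (q - 1)"
        thus ?thesis unfolding Uset_def by blast
      next
        assume "\<exists>k\<in>Mset q m r - I. \<exists>u. x = \<alpha> ^ u \<and> u \<le> NN \<and> wtq q n u + r = n * (q - 1)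
           \<and> \<bar>int (Osum q n u) - int (Esum q n u)\<bar> = int k"
        then obtain k u where ku: "k \<in> Mset q m r - I" "x = \<alpha> ^ u" "u \<le> NN" "wtq q n u + r = n * (q - 1)"
           "\<bar>int (Osum q n u) - int (Esum q n u)\<bar> = int k" by blast
        have "Dd q n u \<in> Mset q m r - I" using th[of u] ku by blast
        thus ?thesis unfolding Uset_def using ku u0[OF ku(4)] by blast
      qed
    next
      assume "\<exists>u. x = \<alpha> ^ u \<and> u \<in> Uset m r I"
      then obtain u where u: "x = \<alpha> ^ u" "u \<in> Uset m r I" by blast
      show "(\<exists>u. x = \<alpha> ^ u \<and> 0 < u \<and> u \<le> NN \<and> wtq q n u + r + 1 \<le> n * (q - 1)) \<or>
      (\<exists>k\<in>Mset q m r - I. \<exists>u. x = \<alpha> ^ u \<and> u \<le> NN \<and> wtq q n u + r = n * (q - 1)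
           \<and> \<bar>int (Osum q n u) - int (Esum q n u)\<bar> = int k)"
        using u th[of u] unfolding Uset_def by blast
    qed
    finally show "x \<in> ZrI q m n \<alpha> r I \<longleftrightarrow> x \<in> (\<lambda>u. \<alpha> ^ u) ` Uset m r I" by blast
  qed
  show ?thesis using key by blast
qed


lemma ext_eq:
  assumes U: "\<forall>u\<in>U. 0 < u \<and> u \<le> NN"
  shows "ext_cyclic q n \<alpha> ((\<lambda>u. \<alpha> ^ u) ` U) = Code (insert 0 U)"
proof -
  have s1: "(\<Sum>i<NN. c (\<alpha> ^ i) * (\<alpha> ^ u) ^ i) = Aco c u" if u: "0 < u" for c u
  proof -
    have "(\<Sum>i<NN. c (\<alpha> ^ i) * (\<alpha> ^ u) ^ i) = (\<Sum>i<NN. c (\<alpha> ^ i) * (\<alpha> ^ i) ^ u)"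
      by (simp add: power_mult[symmetric] mult.commute)
    also have "\<dots> = (\<Sum>x\<in>UNIV-{0}. c x * x ^ u)" by (rule sum_alpha)
    also have "\<dots> = Aco c u" unfolding Aco_def using u by (subst sum_split0) simp
    finally show ?thesis .
  qed
  have s2: "(c 0 = - (\<Sum>i<NN. c (\<alpha> ^ i))) \<longleftrightarrow> Aco c 0 = 0" for c
  proof -
    have "Aco c 0 = c 0 + (\<Sum>i<NN. c (\<alpha> ^ i))"
      unfolding Aco_def sum_alpha by (subst sum_split0) simp
    thus ?thesis by (auto simp: eq_neg_iff_add_eq_0)
  qed
  show ?thesis
    unfolding ext_cyclic_def Code_def NN_def[symmetric]
    using s1 s2 U by auto
qed

lemma T_inv:
  assumes nm: "n = 2 * m" and m: "1 \<le> m"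
    and u: "u \<in> insert 0 (Uset m r I)" and u0: "0 < u" "u < NN"
    and v0: "0 < v" "v < NN" and d: "int NN dvd int v - int u * int q ^ t"
  shows "v \<in> insert 0 (Uset m r I)"
proof -
  have q0: "0 < q" using q2 by simp
  have "wtq q n v = wtq q n u \<and> Dd q n v = Dd q n u"
    using inv_digits[OF q0 m, of u v t] u0 v0 d unfolding NN_def unfolding nm by simp
  thus ?thesis using u u0 v0 unfolding Uset_def by auto
qed

lemma Mset_sym:
  assumes nm: "n = 2 * m" and r: "r \<le> n * (q - 1)"
  shows "Mset q m (n * (q - 1) - r) = Mset q m r"
proof -
  obtain K where K: "n * (q - 1) = 2 * K" using nm by auto
  have "even (2 * K - r) \<longleftrightarrow> even r" using r K by presburger
  hence "even (n * (q - 1) - r) \<longleftrightarrow> even r" using K by simp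
  thus ?thesis unfolding Mset_def by simp
qed

lemma perp_T:
  assumes nm: "n = 2 * m" and r0: "0 < r" and r: "r < n * (q - 1)" and I: "I \<subseteq> Mset q m r"
  shows "perp (insert 0 (Uset m r I)) = insert 0 (Uset m (n * (q - 1) - r) (Mset q m r - I))"
proof -
  have q0: "0 < q" using q2 by simp
  let ?K = "n * (q - 1)"
  have MS: "Mset q m (?K - r) = Mset q m r" using Mset_sym[OF nm] r by simp
  have wN: "wtq q n NN = ?K" unfolding NN_def using wt_N[OF q0] by simp
  have wc: "s \<le> NN \<Longrightarrow> wtq q n (NN - s) = ?K - wtq q n s" for s
    unfolding NN_def using wt_comp[OF q0] by simp
  have Dc: "s \<le> NN \<Longrightarrow> Dd q n (NN - s) = Dd q n s" for s
    unfolding NN_def unfolding nm using Dd_comp[OF q0] by simp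
  have wl: "wtq q n s \<le> ?K" for s using wt_le[OF q0] by simp
  have DM: "wtq q n s = r \<Longrightarrow> Dd q n s \<in> Mset q m r" for s
    using Dd_props[OF q0, of m s] unfolding Mset_def nm by auto
  have NNpos: "0 < NN" using NN_pos by simp
  have key: "s \<in> perp (insert 0 (Uset m r I)) \<longleftrightarrow> s \<in> insert 0 (Uset m (?K - r) (Mset q m r - I))" for s
    proof (cases "s \<le> NN")
      case False thus ?thesis unfolding perp_def Uset_def by auto
    next
      case sN: True
      show ?thesis
      proof (cases "s = 0")
        case True
        have "NN \<notin> Uset m r I" unfolding Uset_def using wN r0 by auto
        thus ?thesis using True NNpos unfolding perp_def by auto
      next
        case s0: False
        show ?thesis
        proof (cases "s = NN")
          case True
          have "NN \<notin> Uset m (?K - r) (Mset q m r - I)" unfolding Uset_def using wN r by auto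
          thus ?thesis using True NNpos unfolding perp_def by auto
        next
          case sNN: False
          have "NN - s \<noteq> 0" "NN - s \<le> NN" "0 < NN - s" using sN s0 sNN by auto
          hence "s \<in> perp (insert 0 (Uset m r I)) \<longleftrightarrow>
              \<not> (?K - wtq q n s + r + 1 \<le> ?K \<or> (?K - wtq q n s + r = ?K \<and> Dd q n s \<in> Mset q m r - I))"
            unfolding perp_def Uset_def using sN wc[OF sN] Dc[OF sN] by auto
          also have "\<dots> \<longleftrightarrow> wtq q n s < r \<or> (wtq q n s = r \<and> Dd q n s \<in> I)"
          proof -
            have a1: "(?K - wtq q n s + r + 1 \<le> ?K) \<longleftrightarrow> r < wtq q n s" using wl[of s] by linarith
            have a2: "(?K - wtq q n s + r = ?K) \<longleftrightarrow> wtq q n s = r" using wl[of s] by linarith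
            show ?thesis unfolding a1 a2 using DM[of s] by auto
          qed
          also have "\<dots> \<longleftrightarrow> s \<in> insert 0 (Uset m (?K - r) (Mset q m r - I))"
            unfolding Uset_def MS using sN s0 r I wl[of s] by auto
          finally show ?thesis .
        qed
      qed
    qed
  show ?thesis using key by blast
qed


lemma T0_full:
  assumes nm: "n = 2 * m" and I0: "0 \<in> Mset q m 0 - I"
  shows "insert 0 (Uset m 0 I) = {..NN}"
proof -
  have q0: "0 < q" using q2 by simp
  have wN: "wtq q n NN = n * (q - 1)" unfolding NN_def using wt_N[OF q0] by simp
  have DN: "Dd q n NN = 0" unfolding NN_def unfolding nm using Dd_N[OF q0] by simp
  have "s \<in> Uset m 0 I" if s: "0 < s" "s \<le> NN" for s
  proof (cases "wtq q n s + 1 \<le> n * (q - 1)")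
    case True thus ?thesis using s unfolding Uset_def by auto
  next
    case False
    hence "wtq q n s = n * (q - 1)" using wt_le[OF q0, of n s] by simp
    hence "s = NN" using wt_max[OF q0, of s n] s unfolding NN_def by simp
    thus ?thesis using wN DN I0 NN_pos unfolding Uset_def by auto
  qed
  hence "{..NN} \<subseteq> insert 0 (Uset m 0 I)" by (auto simp: not_less)
  moreover have "Uset m 0 I \<subseteq> {..NN}" unfolding Uset_def by auto
  ultimately show ?thesis by blast
qed

lemma T0_part:
  assumes nm: "n = 2 * m" and I0: "0 \<notin> Mset q m 0 - I"
  shows "insert 0 (Uset m 0 I) = {..<NN}"
proof -
  have q0: "0 < q" using q2 by simp
  have wN: "wtq q n NN = n * (q - 1)" unfolding NN_def using wt_N[OF q0] by simp
  have DN: "Dd q n NN = 0" unfolding NN_def unfolding nm using Dd_N[OF q0] by simp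
  have "s \<in> Uset m 0 I" if s: "0 < s" "s < NN" for s
  proof (cases "wtq q n s + 1 \<le> n * (q - 1)")
    case True thus ?thesis using s unfolding Uset_def by auto
  next
    case False
    hence "wtq q n s = n * (q - 1)" using wt_le[OF q0, of n s] by simp
    hence "s = NN" using wt_max[OF q0, of s n] s unfolding NN_def by simp
    thus ?thesis using s by simp
  qed
  hence A: "{..<NN} \<subseteq> insert 0 (Uset m 0 I)" by auto
  have "NN \<notin> Uset m 0 I" using wN DN I0 unfolding Uset_def by auto
  moreover have "Uset m 0 I \<subseteq> {..NN}" unfolding Uset_def by auto
  ultimately have "Uset m 0 I \<subseteq> {..<NN}" by (auto simp: le_less)
  hence "insert 0 (Uset m 0 I) \<subseteq> {..<NN}" using NN_pos by auto
  with A show ?thesis by blast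
qed

lemma perp_full: "perp {..NN} = {}" unfolding perp_def by auto

lemma perp_part: "perp {..<NN} = {0}" unfolding perp_def using NN_pos by auto

lemma Code_empty: "Code {} = words q" unfolding Code_def by simp

lemma GRM_eq: "GRM q n \<alpha> (int (n * (q - 1)) - 1) = Code {0}"
proof -
  have q0: "0 < q" using q2 by simp
  have nz: "\<not> (0 < u \<and> u \<le> q ^ n - 1 \<and> wtq q n u = 0)" for u
  proof
    assume a: "0 < u \<and> u \<le> q ^ n - 1 \<and> wtq q n u = 0"
    hence "u < q ^ n" using q0 by (metis NN_Suc NN_def le_imp_less_Suc)
    thus False using wt0[OF q0] a by blast
  qed
  have S: "{\<alpha> ^ u | u. 0 < u \<and> u \<le> q ^ n - 1 \<and> int (wtq q n u) \<le> int (n * (q - 1)) - (int (n * (q - 1)) - 1) - 1} = {}"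
    using nz by auto
  have c: "int (n * (q - 1)) - 1 \<noteq> int (n * (q - 1))" by simp
  have "GRM q n \<alpha> (int (n * (q - 1)) - 1) = ext_cyclic q n \<alpha> {}"
    unfolding GRM_def if_not_P[OF c] S ..
  also have "\<dots> = Code {0}" using ext_eq[of "{}"] by simp
  finally show ?thesis .
qed

lemma main_loc:
  assumes nm: "n = 2 * m" and m: "1 \<le> m" and r: "r < n * (q - 1)" and I: "I \<subseteq> Mset q m r"
  shows "dual_code q (Ccode q m \<alpha> r I) = Ccode q m \<alpha> (n * (q - 1) - r) (Mset q m r - I)"
proof -
  let ?T = "insert 0 (Uset m r I)"
  have U: "\<forall>u\<in>Uset m r I. 0 < u \<and> u \<le> NN" unfolding Uset_def by auto
  have L: "Ccode q m \<alpha> r I = Code ?T"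
    unfolding Ccode_def Let_def nm[symmetric] using r ZrI_eq[OF r, of m I] ext_eq[OF U] by simp
  have D: "dual_code q (Code ?T) = Code (perp ?T)"
  proof (rule dual_Code)
    show "?T \<subseteq> {..NN}" using U by auto
    show "0 \<in> ?T" by simp
    show "\<And>u v t. u \<in> ?T \<Longrightarrow> 0 < u \<Longrightarrow> u < NN \<Longrightarrow> 0 < v \<Longrightarrow> v < NN \<Longrightarrow>
              int NN dvd int v - int u * int q ^ t \<Longrightarrow> v \<in> ?T"
      using T_inv[OF nm m] by blast
  qed
  show ?thesis
  proof (cases "r = 0")
    case False
    have r': "n * (q - 1) - r < n * (q - 1)" "n * (q - 1) - r \<noteq> n * (q - 1)" using False r by auto
    have U': "\<forall>u\<in>Uset m (n * (q - 1) - r) (Mset q m r - I). 0 < u \<and> u \<le> NN" unfolding Uset_def by auto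
    have "Ccode q m \<alpha> (n * (q - 1) - r) (Mset q m r - I) = Code (insert 0 (Uset m (n * (q - 1) - r) (Mset q m r - I)))"
      unfolding Ccode_def Let_def nm[symmetric] using r' ZrI_eq[OF r'(1), of m "Mset q m r - I"] ext_eq[OF U'] by simp
    thus ?thesis using L D perp_T[OF nm _ r I] False by simp
  next
    case True
    show ?thesis
    proof (cases "0 \<in> Mset q m 0 - I")
      case c: True
      have "Ccode q m \<alpha> (n * (q - 1) - r) (Mset q m r - I) = words q"
        unfolding Ccode_def Let_def nm[symmetric] using True c by simp
      thus ?thesis using L D True T0_full[OF nm c] perp_full Code_empty by simp
    next
      case c: False
      have "Ccode q m \<alpha> (n * (q - 1) - r) (Mset q m r - I) = GRM q n \<alpha> (int (n * (q - 1)) - 1)"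
        unfolding Ccode_def Let_def nm[symmetric] using True c by auto
      thus ?thesis using L D True T0_part[OF nm c] perp_part GRM_eq by simp
    qed
  qed
qed

end


theorem theorem4p1:
  fixes p l q m n r :: nat and I :: "nat set" and \<alpha> :: "'a::{field,finite}"
  assumes "prime p" and "l \<ge> 1" and "q = p ^ l"
    and "m \<ge> 1" and "n = 2 * m"
    and "card (UNIV :: 'a set) = q ^ n"
    and "primitive_elem \<alpha>"
    and "r < n * (q - 1)"
    and "I \<subseteq> Mset q m r"
  shows "dual_code q (Ccode q m \<alpha> r I) = Ccode q m \<alpha> (n * (q - 1) - r) (Mset q m r - I)"
proof -
  have p2: "p \<ge> 2" using assms(1) by (rule prime_ge_2_nat)
  have "p ^ 1 \<le> p ^ l" using p2 assms(2) by (intro power_increasing) auto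
  hence q2: "q \<ge> 2" using p2 assms(3) by simp
  have n2: "n \<ge> 2" using assms(4,5) by simp
  have cpos: "CHAR('a) > 0" by (rule finite_imp_CHAR_pos) simp
  have cprime: "prime CHAR('a)" using cpos by (rule prime_CHAR_semidom)
  have "of_nat (card (UNIV::'a set)) = (0::'a)"
  proof -
    have "(\<Sum>x\<in>(UNIV::'a set). x) = (\<Sum>x\<in>(UNIV::'a set). x + 1)"
      by (rule sum.reindex_bij_witness[of _ "\<lambda>y. y + 1" "\<lambda>y. y - 1"]) auto
    also have "\<dots> = (\<Sum>x\<in>(UNIV::'a set). x) + of_nat (card (UNIV::'a set))"
      by (simp add: sum.distrib)
    finally show ?thesis by simp
  qed
  hence "CHAR('a) dvd card (UNIV::'a set)" by (simp add: of_nat_eq_0_iff_char_dvd)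
  hence "CHAR('a) dvd p ^ (l * n)" using assms(3,6) by (simp add: power_mult)
  hence "CHAR('a) dvd p" using cprime prime_dvd_power by blast
  hence cp: "CHAR('a) = p" using cprime assms(1) primes_dvd_imp_eq by blast
  have frob: "(x + y) ^ q = x ^ q + y ^ q" for x y :: 'a
    by (rule freshmans_dream') (simp_all add: cprime cp assms(1,3))
  have "CHAR('a) dvd q" using assms(2,3) cp by (simp add: dvd_power)
  hence qz: "of_nat q = (0::'a)" by (simp add: of_nat_eq_0_iff_char_dvd)
  interpret F: ffc q n \<alpha>
    by unfold_locales (use assms(6,7) n2 q2 frob qz in auto)
  show ?thesis by (rule F.main_loc) (use assms in auto)
qed


end
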